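(* Let $x_a,x_b,l\in\mathbb{R}$ and $U=\{x\in C^1[a,b]: x(a)=x_a,\ x(b)=x_b\}$. Suppose $L$ and $g$ are convex on $[a,b]\times\mathbb{R}^2$, let $\lambda\ge 0$ and $K=L+\lambda g$. Then each $x\in U$ satisfying $\int_a^b g(t,x(t),{}^CD_{a+}^{\alpha,\rho}x(t))\,dt=l$ and $$\partial_2K(t,x(t),{}^CD_{a+}^{\alpha,\rho} x(t))-D_{b-}^{\alpha,\rho}\big(\partial_3K(t,x(t),{}^CD_{a+}^{\alpha,\rho} x(t))\big)=0\quad\text{on }[a,b]$$ minimizes $J(x)=\int_a^b L(t,x(t),{}^CD_{a+}^{\alpha,\rho}x(t))\,dt$ on $U$ subject to the constraint $\int_a^b g(t,x(t),{}^CD_{a+}^{\alpha,\rho}x(t))\,dt=l$.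
   Context: Fix $0<a<b<\infty$, $\alpha\in(0,1)$, $\rho>0$. For $x\in C^1[a,b]$, ${}^CD_{a+}^{\alpha,\rho} x(t)=\frac{\rho^\alpha}{\Gamma(1-\alpha)}\, t^{1-\rho}\frac{d}{dt}\int_a^t \frac{\tau^{\rho-1}}{(t^\rho-\tau^\rho)^\alpha}[x(\tau)-x(a)]\,d\tau=\frac{\rho^\alpha}{\Gamma(1-\alpha)}\int_a^t (t^\rho-\tau^\rho)^{-\alpha}x'(\tau)\,d\tau$. For a function $f$, $D_{b-}^{\alpha,\rho} f(t)=\frac{\rho^\alpha}{\Gamma(1-\alpha)}\frac{d}{dt}\int_t^b (\tau^\rho-t^\rho)^{-\alpha}f(\tau)\,d\tau$. $\partial_i$ denotes the partial derivative with respect to the $i$-th argument. Each of $L,g:[a,b]\times\mathbb{R}^2\to\mathbb{R}$ is continuously differentiable with respect to its second and third arguments, and for every $x\in C^1[a,b]$ the maps $t\mapsto D_{b-}^{\alpha,\rho}(\partial_3L(t,x(t),{}^CD_{a+}^{\alpha,\rho}x(t)))$ and $t\mapsto D_{b-}^{\alpha,\rho}(\partial_3g(t,x(t),{}^CD_{a+}^{\alpha,\rho}x(t)))$ are continuous. A function $F:[a,b]\times\mathbb{R}^2\to\mathbb{R}$ is convex on $S$ if $F(t,x+x_1,y+y_1)-F(t,x,y)\ge\partial_2F(t,x,y)x_1+\partial_3F(t,x,y)y_1$ for all $(t,x,y),(t,x+x_1,y+y_1)\in S$. *)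

theory Defs
  imports "HOL-Analysis.Analysis"
begin

definition C1_on :: "real \<Rightarrow> real \<Rightarrow> (real \<Rightarrow> real) \<Rightarrow> bool" where
  "C1_on a b x \<longleftrightarrow> (\<exists>x'. (\<forall>t\<in>{a..b}. (x has_real_derivative x' t) (at t within {a..b}))
                        \<and> continuous_on {a..b} x')"

definition pd2 :: "(real \<Rightarrow> real \<Rightarrow> real \<Rightarrow> real) \<Rightarrow> real \<Rightarrow> real \<Rightarrow> real \<Rightarrow> real" where
  "pd2 F t u v = deriv (\<lambda>w. F t w v) u"

definition pd3 :: "(real \<Rightarrow> real \<Rightarrow> real \<Rightarrow> real) \<Rightarrow> real \<Rightarrow> real \<Rightarrow> real \<Rightarrow> real" where
  "pd3 F t u v = deriv (\<lambda>w. F t u w) v"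

definition C1_23 :: "real \<Rightarrow> real \<Rightarrow> (real \<Rightarrow> real \<Rightarrow> real \<Rightarrow> real) \<Rightarrow> bool" where
  "C1_23 a b F \<longleftrightarrow>
     continuous_on ({a..b} \<times> UNIV) (\<lambda>(t, u, v). F t u v) \<and>
     (\<forall>t\<in>{a..b}. \<forall>u v. ((\<lambda>w. F t w v) has_real_derivative pd2 F t u v) (at u)
                      \<and> ((\<lambda>w. F t u w) has_real_derivative pd3 F t u v) (at v)) \<and>
     continuous_on ({a..b} \<times> UNIV) (\<lambda>(t, u, v). pd2 F t u v) \<and>
     continuous_on ({a..b} \<times> UNIV) (\<lambda>(t, u, v). pd3 F t u v)"

text \<open>Left Caputo-Katugampola derivative (second form of the definition).\<close>
definition caputo :: "real \<Rightarrow> real \<Rightarrow> real \<Rightarrow> (real \<Rightarrow> real) \<Rightarrow> real \<Rightarrow> real" where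
  "caputo a \<alpha> \<rho> x t = \<rho> powr \<alpha> / Gamma (1 - \<alpha>) *
     integral {a..t} (\<lambda>\<tau>. (t powr \<rho> - \<tau> powr \<rho>) powr (- \<alpha>) * deriv x \<tau>)"

definition rl_int :: "real \<Rightarrow> real \<Rightarrow> real \<Rightarrow> (real \<Rightarrow> real) \<Rightarrow> real \<Rightarrow> real" where
  "rl_int b \<alpha> \<rho> f s = integral {s..b} (\<lambda>\<tau>. (\<tau> powr \<rho> - s powr \<rho>) powr (- \<alpha>) * f \<tau>)"

definition rl_right :: "real \<Rightarrow> real \<Rightarrow> real \<Rightarrow> real \<Rightarrow> (real \<Rightarrow> real) \<Rightarrow> real \<Rightarrow> real" where
  "rl_right a b \<alpha> \<rho> f t = \<rho> powr \<alpha> / Gamma (1 - \<alpha>) *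
     vector_derivative (rl_int b \<alpha> \<rho> f) (at t within {a..b})"

definition rl_right_ok :: "real \<Rightarrow> real \<Rightarrow> real \<Rightarrow> real \<Rightarrow> (real \<Rightarrow> real) \<Rightarrow> bool" where
  "rl_right_ok a b \<alpha> \<rho> f \<longleftrightarrow>
     (\<forall>t\<in>{a..b}. rl_int b \<alpha> \<rho> f differentiable (at t within {a..b})) \<and>
     continuous_on {a..b} (rl_right a b \<alpha> \<rho> f)"

definition convex_S :: "real \<Rightarrow> real \<Rightarrow> (real \<Rightarrow> real \<Rightarrow> real \<Rightarrow> real) \<Rightarrow> bool" where
  "convex_S a b F \<longleftrightarrow> (\<forall>t\<in>{a..b}. \<forall>u v u1 v1.
     F t (u + u1) (v + v1) - F t u v \<ge> pd2 F t u v * u1 + pd3 F t u v * v1)"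

end

theory Submission
  imports Defs
begin


definition kmin :: "real \<Rightarrow> real \<Rightarrow> real \<Rightarrow> real" where
  "kmin a b \<rho> = \<rho> * min (a powr (\<rho> - 1)) (b powr (\<rho> - 1))"

lemma kmin_pos: "0 < a \<Longrightarrow> a \<le> b \<Longrightarrow> 0 < \<rho> \<Longrightarrow> 0 < kmin a b \<rho>"
  unfolding kmin_def by auto

lemma powr_diff_ge:
  assumes "0 < a" "a \<le> \<tau>" "\<tau> < t" "t \<le> b" "0 < \<rho>"
  shows "kmin a b \<rho> * (t - \<tau>) \<le> t powr \<rho> - \<tau> powr \<rho>"
proof -
  have "\<exists>z>\<tau>. z < t \<and> t powr \<rho> - \<tau> powr \<rho> = (t - \<tau>) * (\<rho> * z powr (\<rho> - 1))"
    by (rule MVT2) (use assms in \<open>auto intro!: has_real_derivative_powr\<close>)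
  then obtain z where z: "\<tau> < z" "z < t" "t powr \<rho> - \<tau> powr \<rho> = (t - \<tau>) * (\<rho> * z powr (\<rho> - 1))"
    by blast
  have "min (a powr (\<rho> - 1)) (b powr (\<rho> - 1)) \<le> z powr (\<rho> - 1)"
  proof (cases "\<rho> - 1 \<ge> 0")
    case True
    then have "a powr (\<rho> - 1) \<le> z powr (\<rho> - 1)" using assms z by (intro powr_mono2) auto
    then show ?thesis by linarith
  next
    case False
    then have "b powr (\<rho> - 1) \<le> z powr (\<rho> - 1)" using assms z by (intro powr_mono2') auto
    then show ?thesis by linarith
  qed
  then have "\<rho> * min (a powr (\<rho> - 1)) (b powr (\<rho> - 1)) \<le> \<rho> * z powr (\<rho> - 1)"
    using assms by (intro mult_left_mono) auto
  then have "(t - \<tau>) * (\<rho> * min (a powr (\<rho> - 1)) (b powr (\<rho> - 1))) \<le> (t - \<tau>) * (\<rho> * z powr (\<rho> - 1))"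
    using assms by (intro mult_left_mono) auto
  then show ?thesis using z unfolding kmin_def by (simp add: algebra_simps)
qed

lemma kern_bound:
  assumes "0 < a" "a \<le> \<tau>" "\<tau> \<le> t" "t \<le> b" "0 < \<rho>" "0 \<le> \<alpha>"
  shows "(t powr \<rho> - \<tau> powr \<rho>) powr (- \<alpha>) \<le> kmin a b \<rho> powr (- \<alpha>) * (t - \<tau>) powr (- \<alpha>)"
proof (cases "\<tau> = t")
  case True then show ?thesis by simp
next
  case False
  then have lt: "\<tau> < t" using assms by auto
  have m: "0 < kmin a b \<rho>" using assms by (intro kmin_pos) auto
  have "0 < kmin a b \<rho> * (t - \<tau>)" using m lt by simp
  then have "(t powr \<rho> - \<tau> powr \<rho>) powr (- \<alpha>) \<le> (kmin a b \<rho> * (t - \<tau>)) powr (- \<alpha>)"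
    using powr_diff_ge[OF assms(1,2) lt assms(4,5)] assms by (intro powr_mono2') auto
  also have "\<dots> = kmin a b \<rho> powr (- \<alpha>) * (t - \<tau>) powr (- \<alpha>)"
    using m lt by (simp add: powr_mult)
  finally show ?thesis .
qed

lemma kern_nonneg: "0 \<le> ((t::real) powr \<rho> - \<tau> powr \<rho>) powr (- \<alpha>)"
  by (rule powr_ge_zero)

lemma int_left:
  fixes a t \<alpha> :: real
  assumes "a \<le> t" "0 < \<alpha>" "\<alpha> < 1"
  shows "((\<lambda>\<tau>. (t - \<tau>) powr (- \<alpha>)) has_integral (t - a) powr (1 - \<alpha>) / (1 - \<alpha>)) {a..t}"
proof -
  have "((\<lambda>\<tau>. (t - \<tau>) powr (- \<alpha>)) has_integral
     ((\<lambda>\<tau>. - ((t - \<tau>) powr (1 - \<alpha>) / (1 - \<alpha>))) t - (\<lambda>\<tau>. - ((t - \<tau>) powr (1 - \<alpha>) / (1 - \<alpha>))) a)) {a..t}"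
  proof (rule fundamental_theorem_of_calculus_interior_strong[where S="{}" and f="\<lambda>\<tau>::real. - ((t - \<tau>) powr (1 - \<alpha>) / (1 - \<alpha>))"])
    fix x assume x: "x \<in> {a<..<t} - {}"
    have "((\<lambda>\<tau>. - ((t - \<tau>) powr (1 - \<alpha>) / (1 - \<alpha>))) has_real_derivative
            - (((1 - \<alpha>) * (t - x) powr (1 - \<alpha> - 1) * (0 - 1)) / (1 - \<alpha>))) (at x)"
      using x by (auto intro!: derivative_eq_intros)
    moreover have "- (((1 - \<alpha>) * (t - x) powr (1 - \<alpha> - 1) * (0 - 1)) / (1 - \<alpha>)) = (t - x) powr (- \<alpha>)"
      using assms by simp
    ultimately show "((\<lambda>\<tau>. - ((t - \<tau>) powr (1 - \<alpha>) / (1 - \<alpha>))) has_vector_derivative (t - x) powr (- \<alpha>)) (at x)"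
      by (simp add: has_real_derivative_iff_has_vector_derivative)
  next
    show "continuous_on {a..t} (\<lambda>\<tau>. - ((t - \<tau>) powr (1 - \<alpha>) / (1 - \<alpha>)))"
      using assms by (intro continuous_intros continuous_on_powr') auto
  qed (use assms in auto)
  then show ?thesis by simp
qed

lemma int_right:
  fixes s b \<alpha> :: real
  assumes "s \<le> b" "0 < \<alpha>" "\<alpha> < 1"
  shows "((\<lambda>t. (t - s) powr (- \<alpha>)) has_integral (b - s) powr (1 - \<alpha>) / (1 - \<alpha>)) {s..b}"
proof -
  have "((\<lambda>t. (t - s) powr (- \<alpha>)) has_integral
     ((\<lambda>t. ((t - s) powr (1 - \<alpha>) / (1 - \<alpha>))) b - (\<lambda>t. ((t - s) powr (1 - \<alpha>) / (1 - \<alpha>))) s)) {s..b}"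
  proof (rule fundamental_theorem_of_calculus_interior_strong[where S="{}" and f="\<lambda>t::real. ((t - s) powr (1 - \<alpha>) / (1 - \<alpha>))"])
    fix x assume x: "x \<in> {s<..<b} - {}"
    have "((\<lambda>t. ((t - s) powr (1 - \<alpha>) / (1 - \<alpha>))) has_real_derivative
            (((1 - \<alpha>) * (x - s) powr (1 - \<alpha> - 1) * (1 - 0)) / (1 - \<alpha>))) (at x)"
      using x by (auto intro!: derivative_eq_intros)
    moreover have "(((1 - \<alpha>) * (x - s) powr (1 - \<alpha> - 1) * (1 - 0)) / (1 - \<alpha>)) = (x - s) powr (- \<alpha>)"
      using assms by simp
    ultimately show "((\<lambda>t. ((t - s) powr (1 - \<alpha>) / (1 - \<alpha>))) has_vector_derivative (x - s) powr (- \<alpha>)) (at x)"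
      by (simp add: has_real_derivative_iff_has_vector_derivative)
  next
    show "continuous_on {s..b} (\<lambda>t. ((t - s) powr (1 - \<alpha>) / (1 - \<alpha>)))"
      using assms by (intro continuous_intros continuous_on_powr') auto
  qed (use assms in auto)
  then show ?thesis by simp
qed



definition mb :: "real \<Rightarrow> real \<Rightarrow> (real \<Rightarrow> real) \<Rightarrow> bool" where
  "mb a b f \<longleftrightarrow> (\<exists>g. g \<in> borel_measurable borel \<and> (\<forall>t\<in>{a..b}. g t = f t)) \<and> (\<exists>B. \<forall>t\<in>{a..b}. \<bar>f t\<bar> \<le> B)"

lemma mb_glob:
  assumes "mb a b f"
  obtains g B where "g \<in> borel_measurable borel" "\<And>t. t \<in> {a..b} \<Longrightarrow> g t = f t" "\<And>t. \<bar>g t\<bar> \<le> B"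
proof -
  obtain g0 B where g0: "g0 \<in> borel_measurable borel" "\<forall>t\<in>{a..b}. g0 t = f t" and B: "\<forall>t\<in>{a..b}. \<bar>f t\<bar> \<le> B"
    using assms unfolding mb_def by blast
  define g where "g t = indicator {a..b} t * g0 t" for t
  have "g \<in> borel_measurable borel" unfolding g_def using g0(1) by measurable
  moreover have "\<And>t. t \<in> {a..b} \<Longrightarrow> g t = f t" using g0 by (simp add: g_def)
  moreover have "\<bar>g t\<bar> \<le> max B 0" for t
  proof (cases "t \<in> {a..b}")
    case True
    then have "\<bar>f t\<bar> \<le> B" "g t = f t" using g0 B by (auto simp: g_def)
    then show ?thesis by (metis max.coboundedI1)
  next
    case False then show ?thesis by (simp add: g_def)
  qed
  ultimately show ?thesis by (rule that)
qed

lemma mb_cong: "mb a b f \<Longrightarrow> (\<And>t. t \<in> {a..b} \<Longrightarrow> f t = g t) \<Longrightarrow> mb a b g"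
  unfolding mb_def by (metis (no_types, opaque_lifting))

lemma mb_const: "mb a b (\<lambda>t. c)"
  unfolding mb_def by (rule conjI, rule exI[of _ "\<lambda>t. c"], simp, rule exI[of _ "\<bar>c\<bar>"], simp)

lemma mb_add: "mb a b f \<Longrightarrow> mb a b g \<Longrightarrow> mb a b (\<lambda>t. f t + g t)"
proof -
  assume f: "mb a b f" and g: "mb a b g"
  obtain f1 B1 where f1: "f1 \<in> borel_measurable borel" "\<And>t. t \<in> {a..b} \<Longrightarrow> f1 t = f t" "\<And>t. \<bar>f1 t\<bar> \<le> B1"
    using mb_glob[OF f] by blast
  obtain g1 B2 where g1: "g1 \<in> borel_measurable borel" "\<And>t. t \<in> {a..b} \<Longrightarrow> g1 t = g t" "\<And>t. \<bar>g1 t\<bar> \<le> B2"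
    using mb_glob[OF g] by blast
  show ?thesis unfolding mb_def
  proof (intro conjI exI[of _ "\<lambda>t. f1 t + g1 t"] exI[of _ "B1 + B2"] ballI)
    show "(\<lambda>t. f1 t + g1 t) \<in> borel_measurable borel" using f1 g1 by measurable
    fix t assume t: "t \<in> {a..b}"
    show "f1 t + g1 t = f t + g t" using f1 g1 t by simp
    show "\<bar>f t + g t\<bar> \<le> B1 + B2" using f1(2,3)[of t] g1(2,3)[of t] t by linarith
  qed
qed

lemma mb_mult: "mb a b f \<Longrightarrow> mb a b g \<Longrightarrow> mb a b (\<lambda>t. f t * g t)"
proof -
  assume f: "mb a b f" and g: "mb a b g"
  obtain f1 B1 where f1: "f1 \<in> borel_measurable borel" "\<And>t. t \<in> {a..b} \<Longrightarrow> f1 t = f t" "\<And>t. \<bar>f1 t\<bar> \<le> B1"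
    using mb_glob[OF f] by blast
  obtain g1 B2 where g1: "g1 \<in> borel_measurable borel" "\<And>t. t \<in> {a..b} \<Longrightarrow> g1 t = g t" "\<And>t. \<bar>g1 t\<bar> \<le> B2"
    using mb_glob[OF g] by blast
  show ?thesis unfolding mb_def
  proof (intro conjI exI[of _ "\<lambda>t. f1 t * g1 t"] exI[of _ "B1 * B2"] ballI)
    show "(\<lambda>t. f1 t * g1 t) \<in> borel_measurable borel" using f1 g1 by measurable
    fix t assume t: "t \<in> {a..b}"
    show "f1 t * g1 t = f t * g t" using f1 g1 t by simp
    have "\<bar>f1 t * g1 t\<bar> \<le> B1 * B2"
      unfolding abs_mult by (rule mult_mono) (use f1(3)[of t] g1(3)[of t] in auto)
    then show "\<bar>f t * g t\<bar> \<le> B1 * B2" using f1(2)[of t] g1(2)[of t] t by simp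
  qed
qed

lemma mb_cmult: "mb a b f \<Longrightarrow> mb a b (\<lambda>t. c * f t)"
  using mb_mult[OF mb_const] by blast

lemma mb_diff: "mb a b f \<Longrightarrow> mb a b g \<Longrightarrow> mb a b (\<lambda>t. f t - g t)"
  using mb_add[of a b f "\<lambda>t. (-1) * g t"] mb_cmult[of a b g "-1"] by simp

lemma mb_cont:
  assumes "continuous_on {a..b} f"
  shows "mb a b f"
  unfolding mb_def
proof (intro conjI)
  show "\<exists>g. g \<in> borel_measurable borel \<and> (\<forall>t\<in>{a..b}. g t = f t)"
    by (rule exI[of _ "\<lambda>t. indicator {a..b} t *\<^sub>R f t"])
       (use borel_measurable_continuous_on_indicator[OF _ assms] in auto)
  have "compact (f ` {a..b})" by (rule compact_continuous_image[OF assms compact_Icc])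
  then obtain B where "\<forall>y\<in>f ` {a..b}. norm y \<le> B"
    using compact_imp_bounded bounded_iff by metis
  then show "\<exists>B. \<forall>t\<in>{a..b}. \<bar>f t\<bar> \<le> B" by auto
qed

lemma mb_comp3:
  assumes G: "continuous_on ({a..b} \<times> UNIV) (\<lambda>(t, u, v). G t u v)"
    and u: "mb a b u" and v: "mb a b v"
  shows "mb a b (\<lambda>t. G t (u t) (v t))"
proof -
  obtain u1 B1 where u1: "u1 \<in> borel_measurable borel" "\<And>t. t \<in> {a..b} \<Longrightarrow> u1 t = u t" "\<And>t. \<bar>u1 t\<bar> \<le> B1"
    using mb_glob[OF u] by blast
  obtain v1 B2 where v1: "v1 \<in> borel_measurable borel" "\<And>t. t \<in> {a..b} \<Longrightarrow> v1 t = v t" "\<And>t. \<bar>v1 t\<bar> \<le> B2"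
    using mb_glob[OF v] by blast
  define A :: "(real \<times> real \<times> real) set" where "A = {a..b} \<times> UNIV"
  define H where "H p = (if p \<in> A then (\<lambda>(t, u, v). G t u v) p else 0)" for p
  have Ab: "A \<in> sets borel" unfolding A_def by (intro borel_closed closed_Times) auto
  have H: "H \<in> borel_measurable borel" unfolding H_def
    by (rule borel_measurable_continuous_on_if[OF Ab]) (use G in \<open>auto simp: A_def\<close>)
  have m: "(\<lambda>t. H (t, u1 t, v1 t)) \<in> borel_measurable borel"
    using H u1(1) v1(1) by measurable
  define C :: "(real \<times> real \<times> real) set" where "C = {a..b} \<times> ({-B1..B1} \<times> {-B2..B2})"
  have "compact C" unfolding C_def by (intro compact_Times compact_Icc)
  moreover have "continuous_on C (\<lambda>(t, u, v). G t u v)"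
    by (rule continuous_on_subset[OF G]) (auto simp: C_def)
  ultimately have "compact ((\<lambda>(t, u, v). G t u v) ` C)" by (rule compact_continuous_image[rotated])
  then obtain B where B: "\<forall>y\<in>(\<lambda>(t, u, v). G t u v) ` C. norm y \<le> B"
    using compact_imp_bounded bounded_iff by metis
  show ?thesis unfolding mb_def
  proof (intro conjI exI[of _ "\<lambda>t. H (t, u1 t, v1 t)"] exI[of _ B] ballI)
    show "(\<lambda>t. H (t, u1 t, v1 t)) \<in> borel_measurable borel" by (rule m)
    fix t assume t: "t \<in> {a..b}"
    show "H (t, u1 t, v1 t) = G t (u t) (v t)" using t u1(2) v1(2) by (simp add: H_def A_def)
    have "(t, u t, v t) \<in> C" using t u1(2,3)[of t] v1(2,3)[of t] by (auto simp: C_def abs_le_iff)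
    then show "\<bar>G t (u t) (v t)\<bar> \<le> B" using B by force
  qed
qed

lemma mb_set_integrable:
  assumes "mb a b f"
  obtains g where "g \<in> borel_measurable borel" "\<And>t. t \<in> {a..b} \<Longrightarrow> g t = f t"
    "set_integrable lborel {a..b} g"
proof -
  obtain g B where g: "g \<in> borel_measurable borel" "\<And>t. t \<in> {a..b} \<Longrightarrow> g t = f t" "\<And>t. \<bar>g t\<bar> \<le> B"
    using mb_glob[OF assms] by blast
  have "set_integrable lborel {a..b} g"
    unfolding set_integrable_def
  proof (rule integrableI_bounded_set[where A="{a..b}" and B=B])
    show "emeasure lborel {a..b} < \<infinity>" by (simp add: emeasure_lborel_Icc_eq)
  qed (use g in \<open>auto intro!: AE_I2 simp del: abs_le_iff\<close>, metis atLeastAtMost_iff g(2) g(3))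
  then show ?thesis using g that by blast
qed

lemma mb_integrable: "mb a b f \<Longrightarrow> f integrable_on {a..b}"
  by (metis (no_types, lifting) integrable_eq mb_set_integrable set_borel_integral_eq_integral(1))



lemma powr_left_lborel:
  fixes a t \<alpha> :: real
  assumes "a \<le> t" "0 < \<alpha>" "\<alpha> < 1"
  shows "set_integrable lborel {a..t} (\<lambda>\<tau>. (t - \<tau>) powr (- \<alpha>))"
    and "(LINT \<tau>:{a..t}|lborel. (t - \<tau>) powr (- \<alpha>)) = (t - a) powr (1 - \<alpha>) / (1 - \<alpha>)"
proof -
  have hi: "((\<lambda>\<tau>. (t - \<tau>) powr (- \<alpha>)) has_integral (t - a) powr (1 - \<alpha>) / (1 - \<alpha>)) {a..t}"
    by (rule int_left[OF assms])
  then have "(\<lambda>\<tau>. (t - \<tau>) powr (- \<alpha>)) absolutely_integrable_on {a..t}"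
    by (intro nonnegative_absolutely_integrable_1) (auto simp: integrable_on_def)
  then have "integrable lebesgue (\<lambda>\<tau>. indicator {a..t} \<tau> *\<^sub>R (t - \<tau>) powr (- \<alpha>))"
    by (simp add: set_integrable_def)
  then show si: "set_integrable lborel {a..t} (\<lambda>\<tau>. (t - \<tau>) powr (- \<alpha>))"
    unfolding set_integrable_def by (subst (asm) integrable_completion) measurable
  show "(LINT \<tau>:{a..t}|lborel. (t - \<tau>) powr (- \<alpha>)) = (t - a) powr (1 - \<alpha>) / (1 - \<alpha>)"
    using set_borel_integral_eq_integral(2)[OF si] hi by (simp add: integral_unique)
qed

lemma powr_right_lborel:
  fixes s b \<alpha> :: real
  assumes "s \<le> b" "0 < \<alpha>" "\<alpha> < 1"
  shows "set_integrable lborel {s..b} (\<lambda>t. (t - s) powr (- \<alpha>))"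
    and "(LINT t:{s..b}|lborel. (t - s) powr (- \<alpha>)) = (b - s) powr (1 - \<alpha>) / (1 - \<alpha>)"
proof -
  have hi: "((\<lambda>t. (t - s) powr (- \<alpha>)) has_integral (b - s) powr (1 - \<alpha>) / (1 - \<alpha>)) {s..b}"
    by (rule int_right[OF assms])
  then have "(\<lambda>t. (t - s) powr (- \<alpha>)) absolutely_integrable_on {s..b}"
    by (intro nonnegative_absolutely_integrable_1) (auto simp: integrable_on_def)
  then have "integrable lebesgue (\<lambda>t. indicator {s..b} t *\<^sub>R (t - s) powr (- \<alpha>))"
    by (simp add: set_integrable_def)
  then show si: "set_integrable lborel {s..b} (\<lambda>t. (t - s) powr (- \<alpha>))"
    unfolding set_integrable_def by (subst (asm) integrable_completion) measurable
  show "(LINT t:{s..b}|lborel. (t - s) powr (- \<alpha>)) = (b - s) powr (1 - \<alpha>) / (1 - \<alpha>)"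
    using set_borel_integral_eq_integral(2)[OF si] hi by (simp add: integral_unique)
qed



lemma LK:
  fixes a b t \<alpha> \<rho> B :: real and \<phi> :: "real \<Rightarrow> real"
  assumes "0 < a" "a \<le> t" "t \<le> b" "0 < \<alpha>" "\<alpha> < 1" "0 < \<rho>"
    and \<phi>: "\<phi> \<in> borel_measurable borel" "\<And>\<tau>. \<bar>\<phi> \<tau>\<bar> \<le> B"
  shows "set_integrable lborel {a..t} (\<lambda>\<tau>. (t powr \<rho> - \<tau> powr \<rho>) powr (- \<alpha>) * \<phi> \<tau>)"
    and "\<bar>LINT \<tau>:{a..t}|lborel. (t powr \<rho> - \<tau> powr \<rho>) powr (- \<alpha>) * \<phi> \<tau>\<bar>
           \<le> B * kmin a b \<rho> powr (- \<alpha>) * ((b - a) powr (1 - \<alpha>) / (1 - \<alpha>))"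
proof -
  let ?M = "kmin a b \<rho> powr (- \<alpha>)"
  let ?f = "\<lambda>\<tau>. indicator {a..t} \<tau> *\<^sub>R ((t powr \<rho> - \<tau> powr \<rho>) powr (- \<alpha>) * \<phi> \<tau>)"
  let ?g = "\<lambda>\<tau>. indicator {a..t} \<tau> *\<^sub>R (B * ?M * (t - \<tau>) powr (- \<alpha>))"
  have B0: "0 \<le> B" using \<phi>(2)[of 0] by linarith
  have eq: "?g = (\<lambda>\<tau>. (B * ?M) * (indicator {a..t} \<tau> *\<^sub>R (t - \<tau>) powr (- \<alpha>)))"
    by (auto simp: fun_eq_iff indicator_def)
  have gi: "integrable lborel ?g" unfolding eq
    using powr_left_lborel(1)[OF assms(2,4,5)] unfolding set_integrable_def
    by (intro integrable_mult_right)
  have bnd: "norm (?f \<tau>) \<le> norm (?g \<tau>)" for \<tau>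
  proof (cases "\<tau> \<in> {a..t}")
    case True
    have "\<bar>(t powr \<rho> - \<tau> powr \<rho>) powr (- \<alpha>) * \<phi> \<tau>\<bar> = (t powr \<rho> - \<tau> powr \<rho>) powr (- \<alpha>) * \<bar>\<phi> \<tau>\<bar>"
      by (simp add: abs_mult)
    also have "\<dots> \<le> (?M * (t - \<tau>) powr (- \<alpha>)) * B"
      using True assms kern_bound[of a \<tau> t b \<rho> \<alpha>] \<phi>(2)[of \<tau>]
      by (intro mult_mono) auto
    also have "\<dots> = B * ?M * (t - \<tau>) powr (- \<alpha>)" by (simp only: mult_ac)
    also have "\<dots> \<le> \<bar>B * ?M * (t - \<tau>) powr (- \<alpha>)\<bar>" by (rule abs_ge_self)
    finally have "\<bar>(t powr \<rho> - \<tau> powr \<rho>) powr (- \<alpha>) * \<phi> \<tau>\<bar> \<le> \<bar>B * ?M * (t - \<tau>) powr (- \<alpha>)\<bar>" .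
    then show ?thesis using True by (simp only: indicator_simps scaleR_one real_norm_def)
  next
    case False
    then have "indicator {a..t} \<tau> = (0::real)" by simp
    then show ?thesis by simp
  qed
  have fm: "?f \<in> borel_measurable lborel" using \<phi>(1) by measurable
  show fi: "set_integrable lborel {a..t} (\<lambda>\<tau>. (t powr \<rho> - \<tau> powr \<rho>) powr (- \<alpha>) * \<phi> \<tau>)"
    unfolding set_integrable_def
    by (rule Bochner_Integration.integrable_bound[OF gi fm]) (rule AE_I2, rule bnd)
  have "\<bar>LINT \<tau>:{a..t}|lborel. (t powr \<rho> - \<tau> powr \<rho>) powr (- \<alpha>) * \<phi> \<tau>\<bar> \<le> integral\<^sup>L lborel (\<lambda>\<tau>. norm (?f \<tau>))"
    unfolding set_lebesgue_integral_def using integral_norm_bound[of lborel ?f] by (simp only: real_norm_def)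
  also have "\<dots> \<le> integral\<^sup>L lborel ?g"
  proof (rule integral_mono)
    show "integrable lborel (\<lambda>\<tau>. norm (?f \<tau>))" using fi unfolding set_integrable_def by (rule integrable_norm)
    show "integrable lborel ?g" by (rule gi)
    fix \<tau> :: real
    have "0 \<le> ?g \<tau>" using B0 by (simp add: indicator_def)
    then have "norm (?g \<tau>) = ?g \<tau>" by simp
    then show "norm (?f \<tau>) \<le> ?g \<tau>" using bnd[of \<tau>] by simp
  qed
  also have "\<dots> = B * ?M * (LINT \<tau>:{a..t}|lborel. (t - \<tau>) powr (- \<alpha>))"
    unfolding eq set_lebesgue_integral_def by (rule integral_mult_right_zero)
  also have "\<dots> = B * ?M * ((t - a) powr (1 - \<alpha>) / (1 - \<alpha>))"
    by (simp only: powr_left_lborel(2)[OF assms(2,4,5)])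
  also have "\<dots> \<le> B * ?M * ((b - a) powr (1 - \<alpha>) / (1 - \<alpha>))"
  proof -
    have "(t - a) powr (1 - \<alpha>) \<le> (b - a) powr (1 - \<alpha>)"
      using assms by (intro powr_mono2) auto
    then have "(t - a) powr (1 - \<alpha>) / (1 - \<alpha>) \<le> (b - a) powr (1 - \<alpha>) / (1 - \<alpha>)"
      using assms by (intro divide_right_mono) auto
    moreover have "0 \<le> B * ?M" using B0 by simp
    ultimately show ?thesis by (rule mult_left_mono)
  qed
  finally show "\<bar>LINT \<tau>:{a..t}|lborel. (t powr \<rho> - \<tau> powr \<rho>) powr (- \<alpha>) * \<phi> \<tau>\<bar>
           \<le> B * ?M * ((b - a) powr (1 - \<alpha>) / (1 - \<alpha>))" .
qed


lemma RK:
  fixes a b s \<alpha> \<rho> B :: real and \<phi> :: "real \<Rightarrow> real"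
  assumes "0 < a" "a \<le> s" "s \<le> b" "0 < \<alpha>" "\<alpha> < 1" "0 < \<rho>"
    and \<phi>: "\<phi> \<in> borel_measurable borel" "\<And>\<tau>. \<bar>\<phi> \<tau>\<bar> \<le> B"
  shows "set_integrable lborel {s..b} (\<lambda>\<tau>. (\<tau> powr \<rho> - s powr \<rho>) powr (- \<alpha>) * \<phi> \<tau>)"
    and "\<bar>LINT \<tau>:{s..b}|lborel. (\<tau> powr \<rho> - s powr \<rho>) powr (- \<alpha>) * \<phi> \<tau>\<bar>
           \<le> B * kmin a b \<rho> powr (- \<alpha>) * ((b - a) powr (1 - \<alpha>) / (1 - \<alpha>))"
proof -
  let ?M = "kmin a b \<rho> powr (- \<alpha>)"
  let ?f = "\<lambda>\<tau>. indicator {s..b} \<tau> *\<^sub>R ((\<tau> powr \<rho> - s powr \<rho>) powr (- \<alpha>) * \<phi> \<tau>)"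
  let ?g = "\<lambda>\<tau>. indicator {s..b} \<tau> *\<^sub>R (B * ?M * (\<tau> - s) powr (- \<alpha>))"
  have B0: "0 \<le> B" using \<phi>(2)[of 0] by linarith
  have eq: "?g = (\<lambda>\<tau>. (B * ?M) * (indicator {s..b} \<tau> *\<^sub>R (\<tau> - s) powr (- \<alpha>)))"
    by (auto simp: fun_eq_iff indicator_def)
  have gi: "integrable lborel ?g" unfolding eq
    using powr_right_lborel(1)[OF assms(3,4,5)] unfolding set_integrable_def
    by (intro integrable_mult_right)
  have bnd: "norm (?f \<tau>) \<le> norm (?g \<tau>)" for \<tau>
  proof (cases "\<tau> \<in> {s..b}")
    case True
    have "\<bar>(\<tau> powr \<rho> - s powr \<rho>) powr (- \<alpha>) * \<phi> \<tau>\<bar> = (\<tau> powr \<rho> - s powr \<rho>) powr (- \<alpha>) * \<bar>\<phi> \<tau>\<bar>"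
      by (simp add: abs_mult)
    also have "\<dots> \<le> (?M * (\<tau> - s) powr (- \<alpha>)) * B"
      using True assms kern_bound[of a s \<tau> b \<rho> \<alpha>] \<phi>(2)[of \<tau>]
      by (intro mult_mono) auto
    also have "\<dots> = B * ?M * (\<tau> - s) powr (- \<alpha>)" by (simp only: mult_ac)
    also have "\<dots> \<le> \<bar>B * ?M * (\<tau> - s) powr (- \<alpha>)\<bar>" by (rule abs_ge_self)
    finally have "\<bar>(\<tau> powr \<rho> - s powr \<rho>) powr (- \<alpha>) * \<phi> \<tau>\<bar> \<le> \<bar>B * ?M * (\<tau> - s) powr (- \<alpha>)\<bar>" .
    then show ?thesis using True by (simp only: indicator_simps scaleR_one real_norm_def)
  next
    case False
    then have "indicator {s..b} \<tau> = (0::real)" by simp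
    then show ?thesis by simp
  qed
  have fm: "?f \<in> borel_measurable lborel" using \<phi>(1) by measurable
  show fi: "set_integrable lborel {s..b} (\<lambda>\<tau>. (\<tau> powr \<rho> - s powr \<rho>) powr (- \<alpha>) * \<phi> \<tau>)"
    unfolding set_integrable_def
    by (rule Bochner_Integration.integrable_bound[OF gi fm]) (rule AE_I2, rule bnd)
  have "\<bar>LINT \<tau>:{s..b}|lborel. (\<tau> powr \<rho> - s powr \<rho>) powr (- \<alpha>) * \<phi> \<tau>\<bar> \<le> integral\<^sup>L lborel (\<lambda>\<tau>. norm (?f \<tau>))"
    unfolding set_lebesgue_integral_def using integral_norm_bound[of lborel ?f] by (simp only: real_norm_def)
  also have "\<dots> \<le> integral\<^sup>L lborel ?g"
  proof (rule integral_mono)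
    show "integrable lborel (\<lambda>\<tau>. norm (?f \<tau>))" using fi unfolding set_integrable_def by (rule integrable_norm)
    show "integrable lborel ?g" by (rule gi)
    fix \<tau> :: real
    have "0 \<le> ?g \<tau>" using B0 by (simp add: indicator_def)
    then have "norm (?g \<tau>) = ?g \<tau>" by simp
    then show "norm (?f \<tau>) \<le> ?g \<tau>" using bnd[of \<tau>] by simp
  qed
  also have "\<dots> = B * ?M * (LINT \<tau>:{s..b}|lborel. (\<tau> - s) powr (- \<alpha>))"
    unfolding eq set_lebesgue_integral_def by (rule integral_mult_right_zero)
  also have "\<dots> = B * ?M * ((b - s) powr (1 - \<alpha>) / (1 - \<alpha>))"
    by (simp only: powr_right_lborel(2)[OF assms(3,4,5)])
  also have "\<dots> \<le> B * ?M * ((b - a) powr (1 - \<alpha>) / (1 - \<alpha>))"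
  proof -
    have "(b - s) powr (1 - \<alpha>) \<le> (b - a) powr (1 - \<alpha>)"
      using assms by (intro powr_mono2) auto
    then have "(b - s) powr (1 - \<alpha>) / (1 - \<alpha>) \<le> (b - a) powr (1 - \<alpha>) / (1 - \<alpha>)"
      using assms by (intro divide_right_mono) auto
    moreover have "0 \<le> B * ?M" using B0 by simp
    ultimately show ?thesis by (rule mult_left_mono)
  qed
  finally show "\<bar>LINT \<tau>:{s..b}|lborel. (\<tau> powr \<rho> - s powr \<rho>) powr (- \<alpha>) * \<phi> \<tau>\<bar>
           \<le> B * ?M * ((b - a) powr (1 - \<alpha>) / (1 - \<alpha>))" .
qed



lemma FUB:
  fixes a b \<alpha> \<rho> B :: real and \<phi> \<psi> :: "real \<Rightarrow> real"
  assumes ab: "0 < a" "a \<le> b" and al: "0 < \<alpha>" "\<alpha> < 1" and r: "0 < \<rho>"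
    and \<phi>: "\<phi> \<in> borel_measurable borel" "\<And>\<tau>. \<bar>\<phi> \<tau>\<bar> \<le> B"
    and \<psi>: "\<psi> \<in> borel_measurable borel" "\<And>\<tau>. \<bar>\<psi> \<tau>\<bar> \<le> B"
  shows "integral {a..b} (\<lambda>t. \<psi> t * integral {a..t} (\<lambda>\<tau>. (t powr \<rho> - \<tau> powr \<rho>) powr (- \<alpha>) * \<phi> \<tau>))
       = integral {a..b} (\<lambda>\<tau>. \<phi> \<tau> * integral {\<tau>..b} (\<lambda>t. (t powr \<rho> - \<tau> powr \<rho>) powr (- \<alpha>) * \<psi> t))"
proof -
  define C where "C = B * kmin a b \<rho> powr (- \<alpha>) * ((b - a) powr (1 - \<alpha>) / (1 - \<alpha>))"
  define Fc where "Fc t \<tau> = (if a \<le> \<tau> \<and> \<tau> \<le> t \<and> t \<le> b then \<psi> t * ((t powr \<rho> - \<tau> powr \<rho>) powr (- \<alpha>) * \<phi> \<tau>) else 0)" for t \<tau>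
  have B0: "0 \<le> B" using \<phi>(2)[of 0] by linarith
  have Fm: "case_prod Fc \<in> borel_measurable (lborel \<Otimes>\<^sub>M lborel)"
    unfolding Fc_def using \<phi>(1) \<psi>(1) by measurable
  have Fm2: "(\<lambda>(t, \<tau>). norm (Fc t \<tau>)) \<in> borel_measurable (lborel \<Otimes>\<^sub>M lborel)"
    using Fm by measurable
  have F1: "Fc t = (\<lambda>\<tau>. indicator {a..b} t * (\<psi> t * (indicator {a..t} \<tau> *\<^sub>R ((t powr \<rho> - \<tau> powr \<rho>) powr (- \<alpha>) * \<phi> \<tau>))))" for t
    by (auto simp: fun_eq_iff Fc_def indicator_def)
  have F2: "(\<lambda>t. Fc t \<tau>) = (\<lambda>t. indicator {a..b} \<tau> * (\<phi> \<tau> * (indicator {\<tau>..b} t *\<^sub>R ((t powr \<rho> - \<tau> powr \<rho>) powr (- \<alpha>) * \<psi> t))))" for \<tau>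
    by (auto simp: fun_eq_iff Fc_def indicator_def)
  have Fn: "(\<lambda>\<tau>. norm (Fc t \<tau>)) = (\<lambda>\<tau>. indicator {a..b} t * (\<bar>\<psi> t\<bar> * (indicator {a..t} \<tau> *\<^sub>R ((t powr \<rho> - \<tau> powr \<rho>) powr (- \<alpha>) * \<bar>\<phi> \<tau>\<bar>))))" for t
    by (auto simp: fun_eq_iff Fc_def indicator_def abs_mult)
  have i1: "integrable lborel (\<lambda>\<tau>. Fc t \<tau>)" for t
  proof (cases "t \<in> {a..b}")
    case True
    show ?thesis unfolding F1
      using LK(1)[of a t b \<alpha> \<rho> \<phi> B] ab al r \<phi> True unfolding set_integrable_def
      by (intro integrable_mult_right) auto
  next
    case False then show ?thesis unfolding F1 by simp
  qed
  have integ1: "integrable lborel (\<lambda>t. \<integral>\<tau>. norm (Fc t \<tau>) \<partial>lborel)"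
  proof (rule Bochner_Integration.integrable_bound)
    show "integrable lborel (\<lambda>t. indicator {a..b} t *\<^sub>R (B * C))"
      using borel_integrable_atLeastAtMost'[of a b "\<lambda>_. B * C"] unfolding set_integrable_def by simp
    show "(\<lambda>t. \<integral>\<tau>. norm (Fc t \<tau>) \<partial>lborel) \<in> borel_measurable lborel"
      using Fm2 by measurable
    show "AE t in lborel. norm (\<integral>\<tau>. norm (Fc t \<tau>) \<partial>lborel) \<le> norm (indicator {a..b} t *\<^sub>R (B * C))"
    proof (rule AE_I2)
      fix t :: real
      show "norm (\<integral>\<tau>. norm (Fc t \<tau>) \<partial>lborel) \<le> norm (indicator {a..b} t *\<^sub>R (B * C))"
      proof (cases "t \<in> {a..b}")
        case True
        have "(\<integral>\<tau>. norm (Fc t \<tau>) \<partial>lborel) = \<bar>\<psi> t\<bar> * (LINT \<tau>:{a..t}|lborel. (t powr \<rho> - \<tau> powr \<rho>) powr (- \<alpha>) * \<bar>\<phi> \<tau>\<bar>)"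
          unfolding Fn set_lebesgue_integral_def using True by simp
        also have "\<bar>\<dots>\<bar> \<le> B * C"
        proof -
          have "\<bar>LINT \<tau>:{a..t}|lborel. (t powr \<rho> - \<tau> powr \<rho>) powr (- \<alpha>) * \<bar>\<phi> \<tau>\<bar>\<bar> \<le> C"
            unfolding C_def using LK(2)[of a t b \<alpha> \<rho> "\<lambda>\<tau>. \<bar>\<phi> \<tau>\<bar>" B] ab al r \<phi> True by auto
          then show ?thesis unfolding abs_mult using \<psi>(2)[of t] by (intro mult_mono) auto
        qed
        finally show ?thesis using True B0 al by (simp add: C_def)
      next
        case False
        then show ?thesis unfolding Fn by simp
      qed
    qed
  qed
  have Fi: "integrable (lborel \<Otimes>\<^sub>M lborel) (case_prod Fc)"
    by (rule lborel_pair.Fubini_integrable[OF Fm]) (use integ1 i1 in auto)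
  have in1: "(\<integral>\<tau>. Fc t \<tau> \<partial>lborel) = indicator {a..b} t *\<^sub>R (\<psi> t * integral {a..t} (\<lambda>\<tau>. (t powr \<rho> - \<tau> powr \<rho>) powr (- \<alpha>) * \<phi> \<tau>))" for t
  proof (cases "t \<in> {a..b}")
    case True
    have si: "set_integrable lborel {a..t} (\<lambda>\<tau>. (t powr \<rho> - \<tau> powr \<rho>) powr (- \<alpha>) * \<phi> \<tau>)"
      using LK(1)[of a t b \<alpha> \<rho> \<phi> B] ab al r \<phi> True by auto
    show ?thesis unfolding F1 using True set_borel_integral_eq_integral(2)[OF si]
      by (simp add: set_lebesgue_integral_def)
  next
    case False then show ?thesis unfolding F1 by simp
  qed
  have in2: "(\<integral>t. Fc t \<tau> \<partial>lborel) = indicator {a..b} \<tau> *\<^sub>R (\<phi> \<tau> * integral {\<tau>..b} (\<lambda>t. (t powr \<rho> - \<tau> powr \<rho>) powr (- \<alpha>) * \<psi> t))" for \<tau>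
  proof (cases "\<tau> \<in> {a..b}")
    case True
    have si: "set_integrable lborel {\<tau>..b} (\<lambda>t. (t powr \<rho> - \<tau> powr \<rho>) powr (- \<alpha>) * \<psi> t)"
      using RK(1)[of a \<tau> b \<alpha> \<rho> \<psi> B] ab al r \<psi> True by auto
    show ?thesis unfolding F2 using True set_borel_integral_eq_integral(2)[OF si]
      by (simp add: set_lebesgue_integral_def)
  next
    case False then show ?thesis unfolding F2 by simp
  qed
  have I1: "integrable lborel (\<lambda>t. \<integral>\<tau>. Fc t \<tau> \<partial>lborel)"
    by (rule lborel_pair.integrable_fst[OF Fi])
  have I2: "integrable lborel (\<lambda>\<tau>. \<integral>t. Fc t \<tau> \<partial>lborel)"
    by (rule lborel_pair.integrable_snd[OF Fi])
  have S1: "set_integrable lborel {a..b} (\<lambda>t. \<psi> t * integral {a..t} (\<lambda>\<tau>. (t powr \<rho> - \<tau> powr \<rho>) powr (- \<alpha>) * \<phi> \<tau>))"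
    using I1 unfolding in1 set_integrable_def .
  have S2: "set_integrable lborel {a..b} (\<lambda>\<tau>. \<phi> \<tau> * integral {\<tau>..b} (\<lambda>t. (t powr \<rho> - \<tau> powr \<rho>) powr (- \<alpha>) * \<psi> t))"
    using I2 unfolding in2 set_integrable_def .
  have "(\<integral>\<tau>. (\<integral>t. Fc t \<tau> \<partial>lborel) \<partial>lborel) = (\<integral>t. (\<integral>\<tau>. Fc t \<tau> \<partial>lborel) \<partial>lborel)"
    by (rule lborel_pair.Fubini_integral[OF Fi])
  then show ?thesis
    unfolding in1 in2 set_borel_integral_eq_integral(2)[OF S1, symmetric]
      set_borel_integral_eq_integral(2)[OF S2, symmetric] set_lebesgue_integral_def by simp
qed



lemma LK_mb:
  fixes a b \<alpha> \<rho> :: real and \<phi> :: "real \<Rightarrow> real"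
  assumes ab: "0 < a" "a \<le> b" and al: "0 < \<alpha>" "\<alpha> < 1" and r: "0 < \<rho>" and \<phi>: "mb a b \<phi>"
  shows "\<And>t. t \<in> {a..b} \<Longrightarrow> (\<lambda>\<tau>. (t powr \<rho> - \<tau> powr \<rho>) powr (- \<alpha>) * \<phi> \<tau>) integrable_on {a..t}"
    and "mb a b (\<lambda>t. integral {a..t} (\<lambda>\<tau>. (t powr \<rho> - \<tau> powr \<rho>) powr (- \<alpha>) * \<phi> \<tau>))"
proof -
  obtain g B where g: "g \<in> borel_measurable borel" "\<And>t. t \<in> {a..b} \<Longrightarrow> g t = \<phi> t" "\<And>t. \<bar>g t\<bar> \<le> B"
    using mb_glob[OF \<phi>] by blast
  have si: "set_integrable lborel {a..t} (\<lambda>\<tau>. (t powr \<rho> - \<tau> powr \<rho>) powr (- \<alpha>) * g \<tau>)" if "t \<in> {a..b}" for t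
    using LK(1)[of a t b \<alpha> \<rho> g B] ab al r g that by auto
  have eqi: "integral {a..t} (\<lambda>\<tau>. (t powr \<rho> - \<tau> powr \<rho>) powr (- \<alpha>) * \<phi> \<tau>)
        = integral {a..t} (\<lambda>\<tau>. (t powr \<rho> - \<tau> powr \<rho>) powr (- \<alpha>) * g \<tau>)" if "t \<in> {a..b}" for t
    by (rule integral_cong) (use g(2) that in auto)
  show "(\<lambda>\<tau>. (t powr \<rho> - \<tau> powr \<rho>) powr (- \<alpha>) * \<phi> \<tau>) integrable_on {a..t}" if t: "t \<in> {a..b}" for t
    by (rule integrable_eq[OF set_borel_integral_eq_integral(1)[OF si[OF t]]]) (use g(2) t in auto)
  define H where "H t = (\<integral>\<tau>. (if a \<le> \<tau> \<and> \<tau> \<le> t then (t powr \<rho> - \<tau> powr \<rho>) powr (- \<alpha>) * g \<tau> else 0) \<partial>lborel)" for t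
  have Hm: "H \<in> borel_measurable borel"
  proof -
    have "(\<lambda>(t, \<tau>). if a \<le> \<tau> \<and> \<tau> \<le> t then (t powr \<rho> - \<tau> powr \<rho>) powr (- \<alpha>) * g \<tau> else 0) \<in> borel_measurable (lborel \<Otimes>\<^sub>M lborel)"
      using g(1) by measurable
    then have "H \<in> borel_measurable lborel" unfolding H_def
      by (rule lborel.borel_measurable_lebesgue_integral[of "\<lambda>t \<tau>. if a \<le> \<tau> \<and> \<tau> \<le> t then (t powr \<rho> - \<tau> powr \<rho>) powr (- \<alpha>) * g \<tau> else 0", simplified])
    then show ?thesis by simp
  qed
  have Heq: "H t = integral {a..t} (\<lambda>\<tau>. (t powr \<rho> - \<tau> powr \<rho>) powr (- \<alpha>) * \<phi> \<tau>)" if t: "t \<in> {a..b}" for t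
  proof -
    have "H t = (LINT \<tau>:{a..t}|lborel. (t powr \<rho> - \<tau> powr \<rho>) powr (- \<alpha>) * g \<tau>)"
      unfolding H_def set_lebesgue_integral_def by (rule Bochner_Integration.integral_cong) (auto simp: indicator_def)
    also have "\<dots> = integral {a..t} (\<lambda>\<tau>. (t powr \<rho> - \<tau> powr \<rho>) powr (- \<alpha>) * g \<tau>)"
      by (rule set_borel_integral_eq_integral(2)[OF si[OF t]])
    finally show ?thesis using eqi[OF t] by simp
  qed
  show "mb a b (\<lambda>t. integral {a..t} (\<lambda>\<tau>. (t powr \<rho> - \<tau> powr \<rho>) powr (- \<alpha>) * \<phi> \<tau>))"
    unfolding mb_def
  proof (intro conjI exI[of _ H] ballI)
    show "H \<in> borel_measurable borel" by (rule Hm)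
    fix t assume t: "t \<in> {a..b}"
    show "H t = integral {a..t} (\<lambda>\<tau>. (t powr \<rho> - \<tau> powr \<rho>) powr (- \<alpha>) * \<phi> \<tau>)" by (rule Heq[OF t])
  next
    show "\<exists>C. \<forall>t\<in>{a..b}. \<bar>integral {a..t} (\<lambda>\<tau>. (t powr \<rho> - \<tau> powr \<rho>) powr (- \<alpha>) * \<phi> \<tau>)\<bar> \<le> C"
    proof (intro exI ballI)
      fix t assume t: "t \<in> {a..b}"
      have "\<bar>LINT \<tau>:{a..t}|lborel. (t powr \<rho> - \<tau> powr \<rho>) powr (- \<alpha>) * g \<tau>\<bar>
           \<le> B * kmin a b \<rho> powr (- \<alpha>) * ((b - a) powr (1 - \<alpha>) / (1 - \<alpha>))"
        using LK(2)[of a t b \<alpha> \<rho> g B] ab al r g t by auto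
      then show "\<bar>integral {a..t} (\<lambda>\<tau>. (t powr \<rho> - \<tau> powr \<rho>) powr (- \<alpha>) * \<phi> \<tau>)\<bar>
           \<le> B * kmin a b \<rho> powr (- \<alpha>) * ((b - a) powr (1 - \<alpha>) / (1 - \<alpha>))"
        using set_borel_integral_eq_integral(2)[OF si[OF t]] eqi[OF t] by simp
    qed
  qed
qed

lemma RK_mb:
  fixes a b \<alpha> \<rho> :: real and \<psi> :: "real \<Rightarrow> real"
  assumes ab: "0 < a" "a \<le> b" and al: "0 < \<alpha>" "\<alpha> < 1" and r: "0 < \<rho>" and \<psi>: "mb a b \<psi>"
  shows "\<And>s. s \<in> {a..b} \<Longrightarrow> (\<lambda>t. (t powr \<rho> - s powr \<rho>) powr (- \<alpha>) * \<psi> t) integrable_on {s..b}"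
    and "mb a b (\<lambda>s. integral {s..b} (\<lambda>t. (t powr \<rho> - s powr \<rho>) powr (- \<alpha>) * \<psi> t))"
proof -
  obtain g B where g: "g \<in> borel_measurable borel" "\<And>t. t \<in> {a..b} \<Longrightarrow> g t = \<psi> t" "\<And>t. \<bar>g t\<bar> \<le> B"
    using mb_glob[OF \<psi>] by blast
  have si: "set_integrable lborel {s..b} (\<lambda>t. (t powr \<rho> - s powr \<rho>) powr (- \<alpha>) * g t)" if "s \<in> {a..b}" for s
    using RK(1)[of a s b \<alpha> \<rho> g B] ab al r g that by auto
  have eqi: "integral {s..b} (\<lambda>t. (t powr \<rho> - s powr \<rho>) powr (- \<alpha>) * \<psi> t)
        = integral {s..b} (\<lambda>t. (t powr \<rho> - s powr \<rho>) powr (- \<alpha>) * g t)" if "s \<in> {a..b}" for s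
    by (rule integral_cong) (use g(2) that in auto)
  show "(\<lambda>t. (t powr \<rho> - s powr \<rho>) powr (- \<alpha>) * \<psi> t) integrable_on {s..b}" if s: "s \<in> {a..b}" for s
    by (rule integrable_eq[OF set_borel_integral_eq_integral(1)[OF si[OF s]]]) (use g(2) s in auto)
  define H where "H s = (\<integral>t. (if s \<le> t \<and> t \<le> b then (t powr \<rho> - s powr \<rho>) powr (- \<alpha>) * g t else 0) \<partial>lborel)" for s
  have Hm: "H \<in> borel_measurable borel"
  proof -
    have "(\<lambda>(s, t). if s \<le> t \<and> t \<le> b then (t powr \<rho> - s powr \<rho>) powr (- \<alpha>) * g t else 0) \<in> borel_measurable (lborel \<Otimes>\<^sub>M lborel)"
      using g(1) by measurable
    then have "H \<in> borel_measurable lborel" unfolding H_def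
      by (rule lborel.borel_measurable_lebesgue_integral[of "\<lambda>s t. if s \<le> t \<and> t \<le> b then (t powr \<rho> - s powr \<rho>) powr (- \<alpha>) * g t else 0", simplified])
    then show ?thesis by simp
  qed
  have Heq: "H s = integral {s..b} (\<lambda>t. (t powr \<rho> - s powr \<rho>) powr (- \<alpha>) * \<psi> t)" if s: "s \<in> {a..b}" for s
  proof -
    have "H s = (LINT t:{s..b}|lborel. (t powr \<rho> - s powr \<rho>) powr (- \<alpha>) * g t)"
      unfolding H_def set_lebesgue_integral_def by (rule Bochner_Integration.integral_cong) (auto simp: indicator_def)
    also have "\<dots> = integral {s..b} (\<lambda>t. (t powr \<rho> - s powr \<rho>) powr (- \<alpha>) * g t)"
      by (rule set_borel_integral_eq_integral(2)[OF si[OF s]])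
    finally show ?thesis using eqi[OF s] by simp
  qed
  show "mb a b (\<lambda>s. integral {s..b} (\<lambda>t. (t powr \<rho> - s powr \<rho>) powr (- \<alpha>) * \<psi> t))"
    unfolding mb_def
  proof (intro conjI exI[of _ H] ballI)
    show "H \<in> borel_measurable borel" by (rule Hm)
    fix s assume s: "s \<in> {a..b}"
    show "H s = integral {s..b} (\<lambda>t. (t powr \<rho> - s powr \<rho>) powr (- \<alpha>) * \<psi> t)" by (rule Heq[OF s])
  next
    show "\<exists>C. \<forall>s\<in>{a..b}. \<bar>integral {s..b} (\<lambda>t. (t powr \<rho> - s powr \<rho>) powr (- \<alpha>) * \<psi> t)\<bar> \<le> C"
    proof (intro exI ballI)
      fix s assume s: "s \<in> {a..b}"
      have "\<bar>LINT t:{s..b}|lborel. (t powr \<rho> - s powr \<rho>) powr (- \<alpha>) * g t\<bar>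
           \<le> B * kmin a b \<rho> powr (- \<alpha>) * ((b - a) powr (1 - \<alpha>) / (1 - \<alpha>))"
        using RK(2)[of a s b \<alpha> \<rho> g B] ab al r g s by auto
      then show "\<bar>integral {s..b} (\<lambda>t. (t powr \<rho> - s powr \<rho>) powr (- \<alpha>) * \<psi> t)\<bar>
           \<le> B * kmin a b \<rho> powr (- \<alpha>) * ((b - a) powr (1 - \<alpha>) / (1 - \<alpha>))"
        using set_borel_integral_eq_integral(2)[OF si[OF s]] eqi[OF s] by simp
    qed
  qed
qed

lemma FUB_mb:
  fixes a b \<alpha> \<rho> :: real and \<phi> \<psi> :: "real \<Rightarrow> real"
  assumes ab: "0 < a" "a \<le> b" and al: "0 < \<alpha>" "\<alpha> < 1" and r: "0 < \<rho>"
    and \<phi>: "mb a b \<phi>" and \<psi>: "mb a b \<psi>"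
  shows "integral {a..b} (\<lambda>t. \<psi> t * integral {a..t} (\<lambda>\<tau>. (t powr \<rho> - \<tau> powr \<rho>) powr (- \<alpha>) * \<phi> \<tau>))
       = integral {a..b} (\<lambda>\<tau>. \<phi> \<tau> * integral {\<tau>..b} (\<lambda>t. (t powr \<rho> - \<tau> powr \<rho>) powr (- \<alpha>) * \<psi> t))"
proof -
  obtain g1 B1 where g1: "g1 \<in> borel_measurable borel" "\<And>t. t \<in> {a..b} \<Longrightarrow> g1 t = \<phi> t" "\<And>t. \<bar>g1 t\<bar> \<le> B1"
    using mb_glob[OF \<phi>] by blast
  obtain g2 B2 where g2: "g2 \<in> borel_measurable borel" "\<And>t. t \<in> {a..b} \<Longrightarrow> g2 t = \<psi> t" "\<And>t. \<bar>g2 t\<bar> \<le> B2"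
    using mb_glob[OF \<psi>] by blast
  have b1: "\<bar>g1 t\<bar> \<le> max B1 B2" for t using g1(3)[of t] by linarith
  have b2: "\<bar>g2 t\<bar> \<le> max B1 B2" for t using g2(3)[of t] by linarith
  have "integral {a..b} (\<lambda>t. \<psi> t * integral {a..t} (\<lambda>\<tau>. (t powr \<rho> - \<tau> powr \<rho>) powr (- \<alpha>) * \<phi> \<tau>))
      = integral {a..b} (\<lambda>t. g2 t * integral {a..t} (\<lambda>\<tau>. (t powr \<rho> - \<tau> powr \<rho>) powr (- \<alpha>) * g1 \<tau>))"
  proof (rule integral_cong)
    fix t assume t: "t \<in> {a..b}"
    have "integral {a..t} (\<lambda>\<tau>. (t powr \<rho> - \<tau> powr \<rho>) powr (- \<alpha>) * \<phi> \<tau>)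
        = integral {a..t} (\<lambda>\<tau>. (t powr \<rho> - \<tau> powr \<rho>) powr (- \<alpha>) * g1 \<tau>)"
      by (rule integral_cong) (use g1(2) t in auto)
    then show "\<psi> t * integral {a..t} (\<lambda>\<tau>. (t powr \<rho> - \<tau> powr \<rho>) powr (- \<alpha>) * \<phi> \<tau>)
      = g2 t * integral {a..t} (\<lambda>\<tau>. (t powr \<rho> - \<tau> powr \<rho>) powr (- \<alpha>) * g1 \<tau>)"
      using g2(2)[OF t] by simp
  qed
  also have "\<dots> = integral {a..b} (\<lambda>\<tau>. g1 \<tau> * integral {\<tau>..b} (\<lambda>t. (t powr \<rho> - \<tau> powr \<rho>) powr (- \<alpha>) * g2 t))"
    by (rule FUB[OF ab al r g1(1) b1 g2(1) b2])
  also have "\<dots> = integral {a..b} (\<lambda>\<tau>. \<phi> \<tau> * integral {\<tau>..b} (\<lambda>t. (t powr \<rho> - \<tau> powr \<rho>) powr (- \<alpha>) * \<psi> t))"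
  proof (rule integral_cong)
    fix \<tau> assume t: "\<tau> \<in> {a..b}"
    have "integral {\<tau>..b} (\<lambda>t. (t powr \<rho> - \<tau> powr \<rho>) powr (- \<alpha>) * g2 t)
        = integral {\<tau>..b} (\<lambda>t. (t powr \<rho> - \<tau> powr \<rho>) powr (- \<alpha>) * \<psi> t)"
      by (rule integral_cong) (use g2(2) t in auto)
    then show "g1 \<tau> * integral {\<tau>..b} (\<lambda>t. (t powr \<rho> - \<tau> powr \<rho>) powr (- \<alpha>) * g2 t)
      = \<phi> \<tau> * integral {\<tau>..b} (\<lambda>t. (t powr \<rho> - \<tau> powr \<rho>) powr (- \<alpha>) * \<psi> t)"
      using g1(2)[OF t] by simp
  qed
  finally show ?thesis .
qed



lemma C1_facts:
  assumes "C1_on a b x"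
  obtains x' where "\<And>t. t \<in> {a..b} \<Longrightarrow> (x has_real_derivative x' t) (at t within {a..b})"
    "continuous_on {a..b} x'" "continuous_on {a..b} x" "\<And>t. t \<in> {a<..<b} \<Longrightarrow> deriv x t = x' t"
proof -
  obtain x' where d: "\<forall>t\<in>{a..b}. (x has_real_derivative x' t) (at t within {a..b})" and c: "continuous_on {a..b} x'"
    using assms unfolding C1_on_def by blast
  have "continuous_on {a..b} x"
    unfolding continuous_on_eq_continuous_within
    using d DERIV_continuous by blast
  moreover have "deriv x t = x' t" if t: "t \<in> {a<..<b}" for t
  proof -
    have "t \<in> interior {a..b}" using t by simp
    then have "at t within {a..b} = at t" by (rule at_within_interior)
    moreover have "(x has_real_derivative x' t) (at t within {a..b})" using d t by auto
    ultimately have "(x has_real_derivative x' t) (at t)" by simp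
    then show ?thesis by (rule DERIV_imp_deriv)
  qed
  ultimately show ?thesis using that d c by blast
qed

lemma caputo_eq:
  assumes "\<And>t. t \<in> {a<..<b} \<Longrightarrow> deriv x t = x' t" "t \<in> {a..b}"
  shows "caputo a \<alpha> \<rho> x t = \<rho> powr \<alpha> / Gamma (1 - \<alpha>) * integral {a..t} (\<lambda>\<tau>. (t powr \<rho> - \<tau> powr \<rho>) powr (- \<alpha>) * x' \<tau>)"
proof -
  have "integral {a..t} (\<lambda>\<tau>. (t powr \<rho> - \<tau> powr \<rho>) powr (- \<alpha>) * deriv x \<tau>)
      = integral {a..t} (\<lambda>\<tau>. (t powr \<rho> - \<tau> powr \<rho>) powr (- \<alpha>) * x' \<tau>)"
    by (rule integral_spike[where S="{a,b}"]) (use assms in auto)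
  then show ?thesis unfolding caputo_def by simp
qed

lemma IBP:
  fixes a b :: real and h h' F F' :: "real \<Rightarrow> real"
  assumes "a \<le> b"
    and hd: "\<And>t. t \<in> {a..b} \<Longrightarrow> (h has_real_derivative h' t) (at t within {a..b})"
    and hc: "continuous_on {a..b} h'"
    and Fd: "\<And>t. t \<in> {a..b} \<Longrightarrow> (F has_real_derivative F' t) (at t within {a..b})"
    and Fc: "continuous_on {a..b} F'"
    and "h a = 0" "h b = 0"
  shows "integral {a..b} (\<lambda>t. h' t * F t) = - integral {a..b} (\<lambda>t. h t * F' t)"
proof -
  have ch: "continuous_on {a..b} h" unfolding continuous_on_eq_continuous_within
    using hd DERIV_continuous by blast
  have cF: "continuous_on {a..b} F" unfolding continuous_on_eq_continuous_within
    using Fd DERIV_continuous by blast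
  have "((\<lambda>t. h' t * F t + h t * F' t) has_integral (h b * F b - h a * F a)) {a..b}"
  proof (rule fundamental_theorem_of_calculus[OF assms(1)])
    fix t assume t: "t \<in> {a..b}"
    have "((\<lambda>t. h t * F t) has_real_derivative h' t * F t + F' t * h t) (at t within {a..b})"
      by (rule DERIV_mult[OF hd[OF t] Fd[OF t]])
    then show "((\<lambda>t. h t * F t) has_vector_derivative h' t * F t + h t * F' t) (at t within {a..b})"
      by (simp add: has_real_derivative_iff_has_vector_derivative mult.commute)
  qed
  then have "integral {a..b} (\<lambda>t. h' t * F t + h t * F' t) = 0" using assms by (simp add: integral_unique)
  moreover have "integral {a..b} (\<lambda>t. h' t * F t + h t * F' t) = integral {a..b} (\<lambda>t. h' t * F t) + integral {a..b} (\<lambda>t. h t * F' t)"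
    by (rule integral_add) (intro integrable_continuous_interval continuous_intros hc cF ch Fc)+
  ultimately show ?thesis by linarith
qed



theorem mainTheorem9:
  fixes a b \<alpha> \<rho> xa xb l lam :: real
    and L g :: "real \<Rightarrow> real \<Rightarrow> real \<Rightarrow> real"
    and x :: "real \<Rightarrow> real"
  assumes "0 < a" and "a < b" and "0 < \<alpha>" and "\<alpha> < 1" and "0 < \<rho>"
    and "C1_23 a b L" and "C1_23 a b g"
    and "\<forall>y. C1_on a b y \<longrightarrow>
           rl_right_ok a b \<alpha> \<rho> (\<lambda>t. pd3 L t (y t) (caputo a \<alpha> \<rho> y t))"
    and "\<forall>y. C1_on a b y \<longrightarrow>
           rl_right_ok a b \<alpha> \<rho> (\<lambda>t. pd3 g t (y t) (caputo a \<alpha> \<rho> y t))"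
    and "convex_S a b L" and "convex_S a b g"
    and "lam \<ge> 0"
    and "C1_on a b x" and "x a = xa" and "x b = xb"
    and "integral {a..b} (\<lambda>t. g t (x t) (caputo a \<alpha> \<rho> x t)) = l"
    and "\<forall>t\<in>{a..b}.
           pd2 (\<lambda>s u v. L s u v + lam * g s u v) t (x t) (caputo a \<alpha> \<rho> x t)
           - rl_right a b \<alpha> \<rho>
               (\<lambda>s. pd3 (\<lambda>s u v. L s u v + lam * g s u v) s (x s) (caputo a \<alpha> \<rho> x s)) t = 0"
  shows "\<forall>y. C1_on a b y \<and> y a = xa \<and> y b = xb
             \<and> integral {a..b} (\<lambda>t. g t (y t) (caputo a \<alpha> \<rho> y t)) = l
           \<longrightarrow> integral {a..b} (\<lambda>t. L t (x t) (caputo a \<alpha> \<rho> x t))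
               \<le> integral {a..b} (\<lambda>t. L t (y t) (caputo a \<alpha> \<rho> y t))"
proof (intro allI impI)
  fix y assume Y: "C1_on a b y \<and> y a = xa \<and> y b = xb
             \<and> integral {a..b} (\<lambda>t. g t (y t) (caputo a \<alpha> \<rho> y t)) = l"
  have ab: "0 < a" "a \<le> b" and al: "0 < \<alpha>" "\<alpha> < 1" and r: "0 < \<rho>" and ab': "a < b"
    using assms by auto
  define c where "c = \<rho> powr \<alpha> / Gamma (1 - \<alpha>)"
  have G0: "0 < Gamma (1 - \<alpha>)" by (rule Gamma_real_pos) (use al in simp)
  have c0: "c \<noteq> 0" unfolding c_def using r G0 by simp
  obtain x' where x': "\<And>t. t \<in> {a..b} \<Longrightarrow> (x has_real_derivative x' t) (at t within {a..b})"
    "continuous_on {a..b} x'" "continuous_on {a..b} x" "\<And>t. t \<in> {a<..<b} \<Longrightarrow> deriv x t = x' t"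
    using C1_facts[OF assms(13)] by blast
  obtain y' where y': "\<And>t. t \<in> {a..b} \<Longrightarrow> (y has_real_derivative y' t) (at t within {a..b})"
    "continuous_on {a..b} y'" "continuous_on {a..b} y" "\<And>t. t \<in> {a<..<b} \<Longrightarrow> deriv y t = y' t"
    using C1_facts[of a b y] Y by blast
  define Ix where "Ix t = integral {a..t} (\<lambda>\<tau>. (t powr \<rho> - \<tau> powr \<rho>) powr (- \<alpha>) * x' \<tau>)" for t
  define Iy where "Iy t = integral {a..t} (\<lambda>\<tau>. (t powr \<rho> - \<tau> powr \<rho>) powr (- \<alpha>) * y' \<tau>)" for t
  have Dx: "caputo a \<alpha> \<rho> x t = c * Ix t" if "t \<in> {a..b}" for t
    unfolding Ix_def c_def by (rule caputo_eq[OF x'(4) that])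
  have Dy: "caputo a \<alpha> \<rho> y t = c * Iy t" if "t \<in> {a..b}" for t
    unfolding Iy_def c_def by (rule caputo_eq[OF y'(4) that])
  have mbx': "mb a b x'" by (rule mb_cont[OF x'(2)])
  have mby': "mb a b y'" by (rule mb_cont[OF y'(2)])
  have mbx: "mb a b x" by (rule mb_cont[OF x'(3)])
  have mby: "mb a b y" by (rule mb_cont[OF y'(3)])
  have mbIx: "mb a b Ix" unfolding Ix_def by (rule LK_mb(2)[OF ab al r mbx'])
  have mbIy: "mb a b Iy" unfolding Iy_def by (rule LK_mb(2)[OF ab al r mby'])
  have mbDx: "mb a b (caputo a \<alpha> \<rho> x)"
    by (rule mb_cong[OF mb_cmult[OF mbIx, of c]]) (use Dx in auto)
  have mbDy: "mb a b (caputo a \<alpha> \<rho> y)"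
    by (rule mb_cong[OF mb_cmult[OF mbIy, of c]]) (use Dy in auto)
  have Lc: "continuous_on ({a..b} \<times> UNIV) (\<lambda>(t, u, v). L t u v)"
    and Ld: "\<And>t u v. t \<in> {a..b} \<Longrightarrow> ((\<lambda>w. L t w v) has_real_derivative pd2 L t u v) (at u)
                      \<and> ((\<lambda>w. L t u w) has_real_derivative pd3 L t u v) (at v)"
    and Lc2: "continuous_on ({a..b} \<times> UNIV) (\<lambda>(t, u, v). pd2 L t u v)"
    and Lc3: "continuous_on ({a..b} \<times> UNIV) (\<lambda>(t, u, v). pd3 L t u v)"
    using assms(6) unfolding C1_23_def by blast+
  have gc: "continuous_on ({a..b} \<times> UNIV) (\<lambda>(t, u, v). g t u v)"
    and gd: "\<And>t u v. t \<in> {a..b} \<Longrightarrow> ((\<lambda>w. g t w v) has_real_derivative pd2 g t u v) (at u)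
                      \<and> ((\<lambda>w. g t u w) has_real_derivative pd3 g t u v) (at v)"
    and gc2: "continuous_on ({a..b} \<times> UNIV) (\<lambda>(t, u, v). pd2 g t u v)"
    and gc3: "continuous_on ({a..b} \<times> UNIV) (\<lambda>(t, u, v). pd3 g t u v)"
    using assms(7) unfolding C1_23_def by blast+
  define K where "K = (\<lambda>s u v. L s u v + lam * g s u v)"
  have pd2K: "pd2 K t u v = pd2 L t u v + lam * pd2 g t u v" if t: "t \<in> {a..b}" for t u v
  proof -
    have "((\<lambda>w. K t w v) has_real_derivative pd2 L t u v + lam * pd2 g t u v) (at u)"
      unfolding K_def using Ld[OF t] gd[OF t] by (intro DERIV_add DERIV_cmult) auto
    then show ?thesis unfolding pd2_def[of K] by (rule DERIV_imp_deriv)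
  qed
  have pd3K: "pd3 K t u v = pd3 L t u v + lam * pd3 g t u v" if t: "t \<in> {a..b}" for t u v
  proof -
    have "((\<lambda>w. K t u w) has_real_derivative pd3 L t u v + lam * pd3 g t u v) (at v)"
      unfolding K_def using Ld[OF t] gd[OF t] by (intro DERIV_add DERIV_cmult) auto
    then show ?thesis unfolding pd3_def[of K] by (rule DERIV_imp_deriv)
  qed
  define fL where "fL = (\<lambda>t. pd3 L t (x t) (caputo a \<alpha> \<rho> x t))"
  define fg where "fg = (\<lambda>t. pd3 g t (x t) (caputo a \<alpha> \<rho> x t))"
  define fK where "fK = (\<lambda>t. pd3 K t (x t) (caputo a \<alpha> \<rho> x t))"
  have fK_eq: "fK t = fL t + lam * fg t" if "t \<in> {a..b}" for t
    unfolding fK_def fL_def fg_def using pd3K[OF that] by simp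
  have mbfL: "mb a b fL" unfolding fL_def by (rule mb_comp3[OF Lc3 mbx mbDx])
  have mbfg: "mb a b fg" unfolding fg_def by (rule mb_comp3[OF gc3 mbx mbDx])
  have mbfK: "mb a b fK"
    by (rule mb_cong[OF mb_add[OF mbfL mb_cmult[OF mbfg, of lam]]]) (use fK_eq in auto)
  have okL: "rl_right_ok a b \<alpha> \<rho> fL" using assms(8) assms(13) unfolding fL_def by blast
  have okg: "rl_right_ok a b \<alpha> \<rho> fg" using assms(9) assms(13) unfolding fg_def by blast
  define DL where "DL t = vector_derivative (rl_int b \<alpha> \<rho> fL) (at t within {a..b})" for t
  define DG where "DG t = vector_derivative (rl_int b \<alpha> \<rho> fg) (at t within {a..b})" for t
  have DLd: "(rl_int b \<alpha> \<rho> fL has_vector_derivative DL t) (at t within {a..b})" if "t \<in> {a..b}" for t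
    using okL that unfolding rl_right_ok_def DL_def by (simp add: vector_derivative_works)
  have DGd: "(rl_int b \<alpha> \<rho> fg has_vector_derivative DG t) (at t within {a..b})" if "t \<in> {a..b}" for t
    using okg that unfolding rl_right_ok_def DG_def by (simp add: vector_derivative_works)
  have DLc: "continuous_on {a..b} DL"
  proof -
    have "continuous_on {a..b} (\<lambda>t. rl_right a b \<alpha> \<rho> fL t / c)"
      using okL unfolding rl_right_ok_def using c0 by (intro continuous_intros) auto
    moreover have "rl_right a b \<alpha> \<rho> fL t / c = DL t" for t
      unfolding rl_right_def DL_def c_def[symmetric] using c0 by simp
    ultimately show ?thesis by simp
  qed
  have DGc: "continuous_on {a..b} DG"
  proof -
    have "continuous_on {a..b} (\<lambda>t. rl_right a b \<alpha> \<rho> fg t / c)"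
      using okg unfolding rl_right_ok_def using c0 by (intro continuous_intros) auto
    moreover have "rl_right a b \<alpha> \<rho> fg t / c = DG t" for t
      unfolding rl_right_def DG_def c_def[symmetric] using c0 by simp
    ultimately show ?thesis by simp
  qed
  define DK where "DK t = DL t + lam * DG t" for t
  have DKc: "continuous_on {a..b} DK" unfolding DK_def by (intro continuous_intros DLc DGc)
  have FK_eq: "rl_int b \<alpha> \<rho> fK s = rl_int b \<alpha> \<rho> fL s + lam * rl_int b \<alpha> \<rho> fg s" if s: "s \<in> {a..b}" for s
  proof -
    have i1: "(\<lambda>t. (t powr \<rho> - s powr \<rho>) powr (- \<alpha>) * fL t) integrable_on {s..b}"
      by (rule RK_mb(1)[OF ab al r mbfL s])
    have i2: "(\<lambda>t. (t powr \<rho> - s powr \<rho>) powr (- \<alpha>) * fg t) integrable_on {s..b}"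
      by (rule RK_mb(1)[OF ab al r mbfg s])
    have "rl_int b \<alpha> \<rho> fK s = integral {s..b} (\<lambda>t. (t powr \<rho> - s powr \<rho>) powr (- \<alpha>) * fL t
              + lam * ((t powr \<rho> - s powr \<rho>) powr (- \<alpha>) * fg t))"
      unfolding rl_int_def by (rule integral_cong) (use fK_eq s in \<open>auto simp: algebra_simps\<close>)
    also have "\<dots> = integral {s..b} (\<lambda>t. (t powr \<rho> - s powr \<rho>) powr (- \<alpha>) * fL t)
              + integral {s..b} (\<lambda>t. lam * ((t powr \<rho> - s powr \<rho>) powr (- \<alpha>) * fg t))"
      by (rule integral_add[OF i1]) (use integrable_on_cmult_left[OF i2, of lam] in simp)
    also have "\<dots> = rl_int b \<alpha> \<rho> fL s + lam * rl_int b \<alpha> \<rho> fg s"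
      unfolding rl_int_def integral_mult_right ..
    finally show ?thesis .
  qed
  have DKd: "(rl_int b \<alpha> \<rho> fK has_real_derivative DK t) (at t within {a..b})" if t: "t \<in> {a..b}" for t
  proof -
    have "((\<lambda>s. rl_int b \<alpha> \<rho> fL s + lam * rl_int b \<alpha> \<rho> fg s) has_real_derivative DL t + lam * DG t) (at t within {a..b})"
      using DLd[OF t] DGd[OF t] unfolding has_real_derivative_iff_has_vector_derivative[symmetric]
      by (intro DERIV_add DERIV_cmult) auto
    then have "((\<lambda>s. rl_int b \<alpha> \<rho> fL s + lam * rl_int b \<alpha> \<rho> fg s) has_vector_derivative DK t) (at t within {a..b})"
      unfolding DK_def has_real_derivative_iff_has_vector_derivative .
    then have "(rl_int b \<alpha> \<rho> fK has_vector_derivative DK t) (at t within {a..b})"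
      by (rule has_vector_derivative_transform[OF t FK_eq, rotated])
    then show ?thesis unfolding has_real_derivative_iff_has_vector_derivative .
  qed
  have rlK: "rl_right a b \<alpha> \<rho> fK t = c * DK t" if t: "t \<in> {a..b}" for t
  proof -
    have "vector_derivative (rl_int b \<alpha> \<rho> fK) (at t within cbox a b) = DK t"
      by (rule vector_derivative_within_cbox[OF ab']) (use t DKd[OF t] in \<open>auto simp: cbox_interval has_real_derivative_iff_has_vector_derivative\<close>)
    then show ?thesis unfolding rl_right_def c_def[symmetric] by (simp add: cbox_interval)
  qed
  define P where "P = (\<lambda>t. pd2 K t (x t) (caputo a \<alpha> \<rho> x t))"
  have EL: "P t = c * DK t" if t: "t \<in> {a..b}" for t
    using assms(17) t rlK[OF t] unfolding P_def fK_def K_def by auto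
  have mbP: "mb a b P"
  proof (rule mb_cong)
    show "mb a b (\<lambda>t. pd2 L t (x t) (caputo a \<alpha> \<rho> x t) + lam * pd2 g t (x t) (caputo a \<alpha> \<rho> x t))"
      by (intro mb_add mb_cmult mb_comp3[OF Lc2 mbx mbDx] mb_comp3[OF gc2 mbx mbDx])
    fix t assume "t \<in> {a..b}"
    then show "pd2 L t (x t) (caputo a \<alpha> \<rho> x t) + lam * pd2 g t (x t) (caputo a \<alpha> \<rho> x t) = P t"
      unfolding P_def using pd2K by simp
  qed
  define h where "h t = y t - x t" for t
  define hp where "hp t = y' t - x' t" for t
  have mbh: "mb a b h" unfolding h_def by (rule mb_diff[OF mby mbx])
  have mbhp: "mb a b hp" unfolding hp_def by (rule mb_diff[OF mby' mbx'])
  define Ih where "Ih t = integral {a..t} (\<lambda>\<tau>. (t powr \<rho> - \<tau> powr \<rho>) powr (- \<alpha>) * hp \<tau>)" for t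
  have Dh: "caputo a \<alpha> \<rho> y t - caputo a \<alpha> \<rho> x t = c * Ih t" if t: "t \<in> {a..b}" for t
  proof -
    have "Iy t - Ix t = integral {a..t} (\<lambda>\<tau>. (t powr \<rho> - \<tau> powr \<rho>) powr (- \<alpha>) * y' \<tau>
                   - (t powr \<rho> - \<tau> powr \<rho>) powr (- \<alpha>) * x' \<tau>)"
      unfolding Iy_def Ix_def
      by (rule integral_diff[symmetric]) (intro LK_mb(1)[OF ab al r _ t] mbx' mby')+
    also have "\<dots> = Ih t" unfolding Ih_def hp_def by (simp add: algebra_simps)
    finally show ?thesis using Dx[OF t] Dy[OF t] by (simp add: algebra_simps)
  qed
  have mbDh: "mb a b (\<lambda>t. caputo a \<alpha> \<rho> y t - caputo a \<alpha> \<rho> x t)" by (rule mb_diff[OF mbDy mbDx])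
  have conv: "P t * h t + fK t * (caputo a \<alpha> \<rho> y t - caputo a \<alpha> \<rho> x t)
      \<le> (L t (y t) (caputo a \<alpha> \<rho> y t) + lam * g t (y t) (caputo a \<alpha> \<rho> y t))
        - (L t (x t) (caputo a \<alpha> \<rho> x t) + lam * g t (x t) (caputo a \<alpha> \<rho> x t))"
    if t: "t \<in> {a..b}" for t
  proof -
    let ?u = "x t" and ?v = "caputo a \<alpha> \<rho> x t" and ?u1 = "h t" and ?v1 = "caputo a \<alpha> \<rho> y t - caputo a \<alpha> \<rho> x t"
    have cL: "L t (?u + ?u1) (?v + ?v1) - L t ?u ?v \<ge> pd2 L t ?u ?v * ?u1 + pd3 L t ?u ?v * ?v1"
      using assms(10) t unfolding convex_S_def by blast
    have cg: "g t (?u + ?u1) (?v + ?v1) - g t ?u ?v \<ge> pd2 g t ?u ?v * ?u1 + pd3 g t ?u ?v * ?v1"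
      using assms(11) t unfolding convex_S_def by blast
    have cg': "lam * (g t (?u + ?u1) (?v + ?v1) - g t ?u ?v) \<ge> lam * (pd2 g t ?u ?v * ?u1 + pd3 g t ?u ?v * ?v1)"
      using mult_left_mono[OF cg assms(12)] .
    have e1: "?u + ?u1 = y t" unfolding h_def by simp
    have e2: "?v + ?v1 = caputo a \<alpha> \<rho> y t" by simp
    have "P t * h t + fK t * ?v1 = (pd2 L t ?u ?v * ?u1 + pd3 L t ?u ?v * ?v1) + lam * (pd2 g t ?u ?v * ?u1 + pd3 g t ?u ?v * ?v1)"
      unfolding P_def fK_def pd2K[OF t] pd3K[OF t] by (simp add: algebra_simps)
    also have "\<dots> \<le> (L t (?u + ?u1) (?v + ?v1) - L t ?u ?v) + lam * (g t (?u + ?u1) (?v + ?v1) - g t ?u ?v)"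
      using cL cg' by linarith
    finally show ?thesis unfolding e1 e2 by (simp add: algebra_simps)
  qed
  have mbLy: "mb a b (\<lambda>t. L t (y t) (caputo a \<alpha> \<rho> y t))" by (rule mb_comp3[OF Lc mby mbDy])
  have mbgy: "mb a b (\<lambda>t. g t (y t) (caputo a \<alpha> \<rho> y t))" by (rule mb_comp3[OF gc mby mbDy])
  have mbLx: "mb a b (\<lambda>t. L t (x t) (caputo a \<alpha> \<rho> x t))" by (rule mb_comp3[OF Lc mbx mbDx])
  have mbgx: "mb a b (\<lambda>t. g t (x t) (caputo a \<alpha> \<rho> x t))" by (rule mb_comp3[OF gc mbx mbDx])
  have ineq: "integral {a..b} (\<lambda>t. P t * h t + fK t * (caputo a \<alpha> \<rho> y t - caputo a \<alpha> \<rho> x t))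
      \<le> integral {a..b} (\<lambda>t. (L t (y t) (caputo a \<alpha> \<rho> y t) + lam * g t (y t) (caputo a \<alpha> \<rho> y t))
        - (L t (x t) (caputo a \<alpha> \<rho> x t) + lam * g t (x t) (caputo a \<alpha> \<rho> x t)))"
    by (rule integral_le[OF mb_integrable mb_integrable conv])
       (intro mb_add mb_mult mb_diff mb_cmult mbP mbh mbfK mbDh mbLy mbgy mbLx mbgx)+
  have iLy: "(\<lambda>t. L t (y t) (caputo a \<alpha> \<rho> y t)) integrable_on {a..b}" by (rule mb_integrable[OF mbLy])
  have igy: "(\<lambda>t. g t (y t) (caputo a \<alpha> \<rho> y t)) integrable_on {a..b}" by (rule mb_integrable[OF mbgy])
  have iLx: "(\<lambda>t. L t (x t) (caputo a \<alpha> \<rho> x t)) integrable_on {a..b}" by (rule mb_integrable[OF mbLx])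
  have igx: "(\<lambda>t. g t (x t) (caputo a \<alpha> \<rho> x t)) integrable_on {a..b}" by (rule mb_integrable[OF mbgx])
  have R: "integral {a..b} (\<lambda>t. (L t (y t) (caputo a \<alpha> \<rho> y t) + lam * g t (y t) (caputo a \<alpha> \<rho> y t))
        - (L t (x t) (caputo a \<alpha> \<rho> x t) + lam * g t (x t) (caputo a \<alpha> \<rho> x t)))
      = integral {a..b} (\<lambda>t. L t (y t) (caputo a \<alpha> \<rho> y t)) - integral {a..b} (\<lambda>t. L t (x t) (caputo a \<alpha> \<rho> x t))"
  proof -
    have i1: "(\<lambda>t. lam * g t (y t) (caputo a \<alpha> \<rho> y t)) integrable_on {a..b}"
      using integrable_on_cmult_left[OF igy, of lam] by simp
    have i2: "(\<lambda>t. lam * g t (x t) (caputo a \<alpha> \<rho> x t)) integrable_on {a..b}"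
      using integrable_on_cmult_left[OF igx, of lam] by simp
    have "integral {a..b} (\<lambda>t. (L t (y t) (caputo a \<alpha> \<rho> y t) + lam * g t (y t) (caputo a \<alpha> \<rho> y t))
        - (L t (x t) (caputo a \<alpha> \<rho> x t) + lam * g t (x t) (caputo a \<alpha> \<rho> x t)))
      = (integral {a..b} (\<lambda>t. L t (y t) (caputo a \<alpha> \<rho> y t)) + lam * integral {a..b} (\<lambda>t. g t (y t) (caputo a \<alpha> \<rho> y t)))
        - (integral {a..b} (\<lambda>t. L t (x t) (caputo a \<alpha> \<rho> x t)) + lam * integral {a..b} (\<lambda>t. g t (x t) (caputo a \<alpha> \<rho> x t)))"
      by (simp add: integral_diff integral_add integrable_add iLy iLx i1 i2)
    then show ?thesis using Y assms(16) by simp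
  qed
  have hd: "(h has_real_derivative hp t) (at t within {a..b})" if "t \<in> {a..b}" for t
    unfolding h_def hp_def by (intro DERIV_diff y'(1) x'(1) that)
  have hpc: "continuous_on {a..b} hp" unfolding hp_def by (intro continuous_intros x'(2) y'(2))
  have h0: "h a = 0" "h b = 0" unfolding h_def using Y assms(14,15) by auto
  have L1: "integral {a..b} (\<lambda>t. P t * h t + fK t * (caputo a \<alpha> \<rho> y t - caputo a \<alpha> \<rho> x t))
      = integral {a..b} (\<lambda>t. P t * h t) + integral {a..b} (\<lambda>t. fK t * (caputo a \<alpha> \<rho> y t - caputo a \<alpha> \<rho> x t))"
    by (rule integral_add) (intro mb_integrable mb_mult mbP mbh mbfK mbDh)+
  have L2: "integral {a..b} (\<lambda>t. P t * h t) = c * integral {a..b} (\<lambda>t. h t * DK t)"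
  proof -
    have "integral {a..b} (\<lambda>t. P t * h t) = integral {a..b} (\<lambda>t. c * (h t * DK t))"
      by (rule integral_cong) (use EL in auto)
    then show ?thesis by (simp add: integral_mult_right)
  qed
  have L3: "integral {a..b} (\<lambda>t. fK t * (caputo a \<alpha> \<rho> y t - caputo a \<alpha> \<rho> x t)) = - c * integral {a..b} (\<lambda>t. h t * DK t)"
  proof -
    have "integral {a..b} (\<lambda>t. fK t * (caputo a \<alpha> \<rho> y t - caputo a \<alpha> \<rho> x t))
        = integral {a..b} (\<lambda>t. c * (fK t * Ih t))"
      by (rule integral_cong) (use Dh in auto)
    also have "\<dots> = c * integral {a..b} (\<lambda>t. fK t * Ih t)" by (rule integral_mult_right)
    also have "integral {a..b} (\<lambda>t. fK t * Ih t) = integral {a..b} (\<lambda>\<tau>. hp \<tau> * rl_int b \<alpha> \<rho> fK \<tau>)"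
      unfolding Ih_def rl_int_def by (rule FUB_mb[OF ab al r mbhp mbfK])
    also have "\<dots> = - integral {a..b} (\<lambda>t. h t * DK t)"
      by (rule IBP[OF ab(2) hd hpc DKd DKc h0])
    finally show ?thesis by simp
  qed
  have "0 \<le> integral {a..b} (\<lambda>t. L t (y t) (caputo a \<alpha> \<rho> y t)) - integral {a..b} (\<lambda>t. L t (x t) (caputo a \<alpha> \<rho> x t))"
    using ineq unfolding R L1 L2 L3 by simp
  then show "integral {a..b} (\<lambda>t. L t (x t) (caputo a \<alpha> \<rho> x t))
               \<le> integral {a..b} (\<lambda>t. L t (y t) (caputo a \<alpha> \<rho> y t))" by simp
qed


end
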